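(* Under B3 the functions $k_1(\theta,x):=\min\{k\geq x_\theta: T(\theta,k)\geq T(\theta,x) \}$ and $k_2(\theta,x):=\max\{k\leq x_\theta: T(\theta,k)\geq T(\theta,x) \}$ are such that $$\mathcal{A}_{\theta,x}=\{k\in\mathcal{X}: k \geq k_1(\theta,x)\}\cup\{k\in\mathcal{X}: k \leq k_2(\theta,x)\}.$$ For any $x$, at least one of $k_1(\theta,x)$ and $k_2(\theta,x)$ is non-constant in $\theta$.
   Context: Let $\Theta$ be a connected open subset of $\mathbb{R}$, $\mathcal{X}\subseteq\mathbb{Z}$ a sample space of consecutive integers, and $P_\theta$ a family of discrete distributions on $\mathcal{X}$, with $\mathrm{P}_\theta$ denoting probability under $P_\theta$. Consider a test of $H_0:\theta=\theta_0$ versus $H_1:\theta\neq\theta_0$ with test statistic $T(\theta_0,x)$ and p-value $\lambda(\theta_0,x)=\mathrm{P}_{\theta_0}(T(\theta_0,X)\geq T(\theta_0,x))=\sum_{k\in\mathcal{A}_{\theta_0,x}}\mathrm{P}_{\theta_0}(X=k)$, where $\mathcal{A}_{\theta,x}=\{k\in\mathcal{X}:T(\theta,k)\geq T(\theta,x)\}$. The test is strictly two-sided, in particular satisfying (B1) for any $x\in\mathcal{X}$ there exists $\theta_x\in\Theta$ with $T(\theta_x,x)<T(\theta_x,y)$ for all $y\in\mathcal{X}\backslash\{x\}$. Condition B3: for any $\theta\in\Theta$ there exists $x_\theta\in\mathcal{X}$ such that $T(\theta,x)$ is decreasing in $x$ when $x<x_\theta$ and increasing in $x$ when $x>x_\theta$.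 *)

theory Defs
  imports "HOL-Analysis.Analysis" "HOL-Library.Extended_Real"
begin

definition consecutive_ints :: "int set \<Rightarrow> bool" where
  "consecutive_ints X \<longleftrightarrow> (\<forall>a b c. a \<in> X \<longrightarrow> c \<in> X \<longrightarrow> a \<le> b \<longrightarrow> b \<le> c \<longrightarrow> b \<in> X)"

definition acc_set :: "(real \<Rightarrow> int \<Rightarrow> real) \<Rightarrow> int set \<Rightarrow> real \<Rightarrow> int \<Rightarrow> int set" where
  "acc_set T X \<theta> x = {k \<in> X. T \<theta> k \<ge> T \<theta> x}"

definition cond_B1 :: "(real \<Rightarrow> int \<Rightarrow> real) \<Rightarrow> real set \<Rightarrow> int set \<Rightarrow> bool" where
  "cond_B1 T \<Theta> X \<longleftrightarrow>
     (\<forall>x\<in>X. \<exists>\<theta>x\<in>\<Theta>. \<forall>y\<in>X - {x}. T \<theta>x x < T \<theta>x y)"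

text \<open>Condition B3, with the turning point x_theta given by the function xt.\<close>
definition cond_B3 :: "(real \<Rightarrow> int \<Rightarrow> real) \<Rightarrow> real set \<Rightarrow> int set \<Rightarrow> (real \<Rightarrow> int) \<Rightarrow> bool" where
  "cond_B3 T \<Theta> X xt \<longleftrightarrow>
     (\<forall>\<theta>\<in>\<Theta>. xt \<theta> \<in> X \<and>
        (\<forall>a\<in>X. \<forall>b\<in>X. a \<le> b \<longrightarrow> b \<le> xt \<theta> \<longrightarrow> T \<theta> b \<le> T \<theta> a) \<and>
        (\<forall>a\<in>X. \<forall>b\<in>X. xt \<theta> \<le> a \<longrightarrow> a \<le> b \<longrightarrow> T \<theta> a \<le> T \<theta> b))"

text \<open>k_1 and k_2, valued in the extended reals (min of the empty set is +infinity,
  max of the empty set is -infinity).\<close>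
definition k1 :: "(real \<Rightarrow> int \<Rightarrow> real) \<Rightarrow> int set \<Rightarrow> (real \<Rightarrow> int) \<Rightarrow> real \<Rightarrow> int \<Rightarrow> ereal" where
  "k1 T X xt \<theta> x = Inf ((\<lambda>k. ereal (real_of_int k)) ` {k \<in> X. k \<ge> xt \<theta> \<and> T \<theta> k \<ge> T \<theta> x})"

definition k2 :: "(real \<Rightarrow> int \<Rightarrow> real) \<Rightarrow> int set \<Rightarrow> (real \<Rightarrow> int) \<Rightarrow> real \<Rightarrow> int \<Rightarrow> ereal" where
  "k2 T X xt \<theta> x = Sup ((\<lambda>k. ereal (real_of_int k)) ` {k \<in> X. k \<le> xt \<theta> \<and> T \<theta> k \<ge> T \<theta> x})"

end

theory Submission
  imports Defs
begin

lemma k1_ex: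
  assumes "ereal (real_of_int k) \<ge> k1 T X xt \<theta> x"
  shows "\<exists>j\<in>X. xt \<theta> \<le> j \<and> T \<theta> j \<ge> T \<theta> x \<and> j \<le> k"
proof (rule ccontr)
  assume "\<not> ?thesis"
  hence "\<forall>j\<in>{k \<in> X. k \<ge> xt \<theta> \<and> T \<theta> k \<ge> T \<theta> x}. ereal (real_of_int (k+1)) \<le> ereal (real_of_int j)"
    by auto
  hence "ereal (real_of_int (k+1)) \<le> k1 T X xt \<theta> x"
    unfolding k1_def by (auto intro!: Inf_greatest)
  with assms have "ereal (real_of_int k + 1) \<le> ereal (real_of_int k)" by (metis of_int_add of_int_1 order_trans)
  thus False by simp
qed

lemma k2_ex:
  assumes "ereal (real_of_int k) \<le> k2 T X xt \<theta> x"
  shows "\<exists>j\<in>X. j \<le> xt \<theta> \<and> T \<theta> j \<ge> T \<theta> x \<and> k \<le> j"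
proof (rule ccontr)
  assume "\<not> ?thesis"
  hence "\<forall>j\<in>{k \<in> X. k \<le> xt \<theta> \<and> T \<theta> k \<ge> T \<theta> x}. ereal (real_of_int j) \<le> ereal (real_of_int (k - 1))"
    by auto
  hence "k2 T X xt \<theta> x \<le> ereal (real_of_int (k - 1))"
    unfolding k2_def by (auto intro!: Sup_least)
  with assms have "ereal (real_of_int k) \<le> ereal (real_of_int k - 1)" by (metis of_int_diff of_int_1 order_trans)
  thus False by simp
qed

theorem proposition2:
  fixes \<Theta> :: "real set" and X :: "int set"
    and T :: "real \<Rightarrow> int \<Rightarrow> real" and xt :: "real \<Rightarrow> int"
  assumes "open \<Theta>" and "connected \<Theta>" and "\<Theta> \<noteq> {}"
    and "consecutive_ints X" and "\<exists>a\<in>X. \<exists>b\<in>X. a \<noteq> b"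
    and "cond_B1 T \<Theta> X"
    and "cond_B3 T \<Theta> X xt"
  shows "(\<forall>\<theta>\<in>\<Theta>. \<forall>x\<in>X.
            acc_set T X \<theta> x =
              {k \<in> X. ereal (real_of_int k) \<ge> k1 T X xt \<theta> x}
              \<union> {k \<in> X. ereal (real_of_int k) \<le> k2 T X xt \<theta> x})
       \<and> (\<forall>x\<in>X. (\<exists>\<theta>\<in>\<Theta>. \<exists>\<theta>'\<in>\<Theta>. k1 T X xt \<theta> x \<noteq> k1 T X xt \<theta>' x)
               \<or> (\<exists>\<theta>\<in>\<Theta>. \<exists>\<theta>'\<in>\<Theta>. k2 T X xt \<theta> x \<noteq> k2 T X xt \<theta>' x))"
proof
  note B3 = assms(7)[unfolded cond_B3_def]
  show "\<forall>\<theta>\<in>\<Theta>. \<forall>x\<in>X.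
            acc_set T X \<theta> x =
              {k \<in> X. ereal (real_of_int k) \<ge> k1 T X xt \<theta> x}
              \<union> {k \<in> X. ereal (real_of_int k) \<le> k2 T X xt \<theta> x}"
  proof (intro ballI equalityI subsetI)
    fix \<theta> x k assume th: "\<theta> \<in> \<Theta>" and x: "x \<in> X" and k: "k \<in> acc_set T X \<theta> x"
    hence kX: "k \<in> X" and kT: "T \<theta> k \<ge> T \<theta> x" by (auto simp: acc_set_def)
    show "k \<in> {k \<in> X. ereal (real_of_int k) \<ge> k1 T X xt \<theta> x}
              \<union> {k \<in> X. ereal (real_of_int k) \<le> k2 T X xt \<theta> x}"
    proof (cases "xt \<theta> \<le> k")
      case True
      hence "k1 T X xt \<theta> x \<le> ereal (real_of_int k)"
        unfolding k1_def using kX kT by (auto intro!: Inf_lower)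
      thus ?thesis using kX by auto
    next
      case False
      hence "ereal (real_of_int k) \<le> k2 T X xt \<theta> x"
        unfolding k2_def using kX kT by (auto intro!: Sup_upper)
      thus ?thesis using kX by auto
    qed
  next
    fix \<theta> x k assume th: "\<theta> \<in> \<Theta>" and x: "x \<in> X"
      and k: "k \<in> {k \<in> X. ereal (real_of_int k) \<ge> k1 T X xt \<theta> x}
              \<union> {k \<in> X. ereal (real_of_int k) \<le> k2 T X xt \<theta> x}"
    have mono: "xt \<theta> \<in> X"
      "\<And>a b. a\<in>X \<Longrightarrow> b\<in>X \<Longrightarrow> a \<le> b \<Longrightarrow> b \<le> xt \<theta> \<Longrightarrow> T \<theta> b \<le> T \<theta> a"
      "\<And>a b. a\<in>X \<Longrightarrow> b\<in>X \<Longrightarrow> xt \<theta> \<le> a \<Longrightarrow> a \<le> b \<Longrightarrow> T \<theta> a \<le> T \<theta> b"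
      using B3 th by blast+
    from k show "k \<in> acc_set T X \<theta> x"
    proof
      assume "k \<in> {k \<in> X. ereal (real_of_int k) \<ge> k1 T X xt \<theta> x}"
      then obtain j where "j \<in> X" "xt \<theta> \<le> j" "T \<theta> j \<ge> T \<theta> x" "j \<le> k" "k \<in> X"
        using k1_ex by blast
      thus ?thesis using mono(3)[of j k] by (auto simp: acc_set_def)
    next
      assume "k \<in> {k \<in> X. ereal (real_of_int k) \<le> k2 T X xt \<theta> x}"
      then obtain j where "j \<in> X" "j \<le> xt \<theta>" "T \<theta> j \<ge> T \<theta> x" "k \<le> j" "k \<in> X"
        using k2_ex by blast
      thus ?thesis using mono(2)[of k j] by (auto simp: acc_set_def)
    qed
  qed
next
  note B3 = assms(7)[unfolded cond_B3_def]
  note B1 = assms(6)[unfolded cond_B1_def]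
  have xtx: "xt \<theta> = x" if th: "\<theta> \<in> \<Theta>" and x: "x \<in> X"
      and s: "\<forall>y\<in>X - {x}. T \<theta> x < T \<theta> y" for \<theta> x
  proof -
    have mono: "xt \<theta> \<in> X"
      "\<And>a b. a\<in>X \<Longrightarrow> b\<in>X \<Longrightarrow> a \<le> b \<Longrightarrow> b \<le> xt \<theta> \<Longrightarrow> T \<theta> b \<le> T \<theta> a"
      "\<And>a b. a\<in>X \<Longrightarrow> b\<in>X \<Longrightarrow> xt \<theta> \<le> a \<Longrightarrow> a \<le> b \<Longrightarrow> T \<theta> a \<le> T \<theta> b"
      using B3 th by blast+
    show ?thesis
    proof (rule ccontr)
      assume ne: "xt \<theta> \<noteq> x"
      hence lt: "T \<theta> x < T \<theta> (xt \<theta>)" using s mono(1) by auto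
      show False
      proof (cases "xt \<theta> < x")
        case True thus False using mono(3)[of "xt \<theta>" x] mono(1) x lt by auto
      next
        case False thus False using mono(2)[of x "xt \<theta>"] mono(1) x lt ne by auto
      qed
    qed
  qed
  have k2x: "k2 T X xt \<theta> x = ereal (real_of_int x)" if "\<theta> \<in> \<Theta>" "x \<in> X" "xt \<theta> = x" for \<theta> x
    unfolding k2_def using that
    by (intro antisym Sup_upper Sup_least) auto
  have k1x: "k1 T X xt \<theta> x = ereal (real_of_int x)" if "\<theta> \<in> \<Theta>" "x \<in> X" "xt \<theta> = x" for \<theta> x
    unfolding k1_def using that
    by (intro antisym Inf_lower Inf_greatest) auto
  show "\<forall>x\<in>X. (\<exists>\<theta>\<in>\<Theta>. \<exists>\<theta>'\<in>\<Theta>. k1 T X xt \<theta> x \<noteq> k1 T X xt \<theta>' x)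
               \<or> (\<exists>\<theta>\<in>\<Theta>. \<exists>\<theta>'\<in>\<Theta>. k2 T X xt \<theta> x \<noteq> k2 T X xt \<theta>' x)"
  proof
    fix x assume x: "x \<in> X"
    obtain y where y: "y \<in> X" "y \<noteq> x" using assms(5) by blast
    obtain tx where tx: "tx \<in> \<Theta>" "\<forall>y\<in>X - {x}. T tx x < T tx y" using B1 x by blast
    obtain ty where ty: "ty \<in> \<Theta>" "\<forall>z\<in>X - {y}. T ty y < T ty z" using B1 y by blast
    have xx: "xt tx = x" using xtx tx x by blast
    have yy: "xt ty = y" using xtx ty y by blast
    show "(\<exists>\<theta>\<in>\<Theta>. \<exists>\<theta>'\<in>\<Theta>. k1 T X xt \<theta> x \<noteq> k1 T X xt \<theta>' x)
               \<or> (\<exists>\<theta>\<in>\<Theta>. \<exists>\<theta>'\<in>\<Theta>. k2 T X xt \<theta> x \<noteq> k2 T X xt \<theta>' x)"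
    proof (cases "y < x")
      case True
      have "k2 T X xt ty x \<le> ereal (real_of_int y)"
        unfolding k2_def using yy by (auto intro!: Sup_least)
      also have "\<dots> < ereal (real_of_int x)" using True by simp
      finally have "k2 T X xt ty x \<noteq> k2 T X xt tx x" using k2x[OF tx(1) x xx] by simp
      thus ?thesis using tx ty by blast
    next
      case False
      hence "x < y" using y by simp
      hence "ereal (real_of_int x) < ereal (real_of_int y)" by simp
      also have "\<dots> \<le> k1 T X xt ty x"
        unfolding k1_def using yy by (auto intro!: Inf_greatest)
      finally have "k1 T X xt ty x \<noteq> k1 T X xt tx x" using k1x[OF tx(1) x xx] by simp
      thus ?thesis using tx ty by blast
    qed
  qed
qed

end
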